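(* Let $c\ge 2$ be an integer and $\mathcal{P}$ a finite bias distribution. Consider a single code position: a value $p$ is drawn from $\mathcal{P}$; $\ell$ pirates ($2\le\ell\le c$) receive bits $b_1,\dots,b_\ell\in\{0,1\}$ that are, given $p$, independent with $\Pr(b_i=1)=p$; the pirates output $y\in\{0,1,?\}$ via a (possibly randomized) strategy depending only on $(b_1,\dots,b_\ell)$ (so that, given the bits, $y$ is independent of $p$) and satisfying: if $b_1=\dots=b_\ell$ then $y=b_1$. For $I\subset\{1,\dots,\ell\}$ with $x:=|I|$, $1\le x\le\ell-1$, let $\mathcal{B}_I$ be the event that $b_i=1$ exactly for $i\in I$, and $\mathcal{B}'_I=\mathcal{B}_I\wedge(y=1)$. Then the following are equivalent: (a) for every $2\le\ell\le c$, every such $I$, and every strategy with $\Pr(\mathcal{B}'_I)>0$, the conditional expectation $$\sum_{p}\Pr(p\mid\mathcal{B}'_I)\bigl(x\sigma(p)-(\ell-x)\sigma(1-p)\bigr)$$ (sum over the possible outputs $p$ of $\mathcal{P}$) equals $0$; (b) $\mathcal{P}$ is $c$-indistinguishable.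
   Context: A finite bias distribution is a probability distribution $\mathcal{P}$ supported on a finite subset of $(0,1)$ that is symmetric: it outputs $a$ and $1-a$ with the same probability. $E_p$ is expectation over $p\sim\mathcal{P}$. $\sigma(p)=\sqrt{(1-p)/p}$; for integers $\ell\ge1$, $0\le x\le\ell$, $f_{\ell,x}(p)=p^x(1-p)^{\ell-x}(x\sigma(p)-(\ell-x)\sigma(1-p))$ and $R_{\ell,x}=\max\{0,E_p[f_{\ell,x}(p)]\}$. $\mathcal{P}$ is $c$-indistinguishable if $\sum_{x=1}^{\ell-1}\binom{\ell}{x}R_{\ell,x}=0$ for all $2\le\ell\le c$. *)

theory Defs
  imports "HOL-Probability.Probability"
begin

definition finite_bias_dist :: "real pmf \<Rightarrow> bool" where
  "finite_bias_dist P \<longleftrightarrow> finite (set_pmf P) \<and> set_pmf P \<subseteq> {0<..<1} \<and>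
     (\<forall>a. pmf P a = pmf P (1 - a))"

definition bias_sigma :: "real \<Rightarrow> real" where
  "bias_sigma p = sqrt ((1 - p) / p)"

definition fbias :: "nat \<Rightarrow> nat \<Rightarrow> real \<Rightarrow> real" where
  "fbias l x p = p ^ x * (1 - p) ^ (l - x) *
     (real x * bias_sigma p - real (l - x) * bias_sigma (1 - p))"

definition Rterm :: "real pmf \<Rightarrow> nat \<Rightarrow> nat \<Rightarrow> real" where
  "Rterm P l x = max 0 (measure_pmf.expectation P (fbias l x))"

definition c_indist :: "nat \<Rightarrow> real pmf \<Rightarrow> bool" where
  "c_indist c P \<longleftrightarrow>
     (\<forall>l. 2 \<le> l \<and> l \<le> c \<longrightarrow> (\<Sum>x = 1..l-1. real (l choose x) * Rterm P l x) = 0)"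

datatype sym = Zero | One | Erasure

text \<open>A pirate strategy for l pirates: maps the bit vector (indices 1..l, False elsewhere)
  to a distribution over outputs; must output the common bit when all bits agree.\<close>
definition valid_strategy :: "nat \<Rightarrow> ((nat \<Rightarrow> bool) \<Rightarrow> sym pmf) \<Rightarrow> bool" where
  "valid_strategy l strat \<longleftrightarrow>
     (\<forall>b. (\<forall>i. i \<notin> {1..l} \<longrightarrow> \<not> b i) \<longrightarrow> (\<forall>i\<in>{1..l}. b i = b 1) \<longrightarrow>
        strat b = return_pmf (if b 1 then One else Zero))"

definition pirate_exp :: "real pmf \<Rightarrow> nat \<Rightarrow> ((nat \<Rightarrow> bool) \<Rightarrow> sym pmf)
    \<Rightarrow> (real \<times> (nat \<Rightarrow> bool) \<times> sym) pmf" where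
  "pirate_exp P l strat =
     bind_pmf P (\<lambda>p. bind_pmf (Pi_pmf {1..l} False (\<lambda>_. bernoulli_pmf p))
       (\<lambda>b. bind_pmf (strat b) (\<lambda>y. return_pmf (p, b, y))))"

definition evB' :: "nat set \<Rightarrow> (real \<times> (nat \<Rightarrow> bool) \<times> sym) set" where
  "evB' I = {(p, b, y). b = (\<lambda>i. i \<in> I) \<and> y = One}"

end

theory Submission
  imports Defs
begin

lemma pmf_exp_pt:
  "pmf (pirate_exp P l strat) (p0, \<beta>, y0) =
     pmf P p0 * pmf (Pi_pmf {1..l} False (\<lambda>_. bernoulli_pmf p0)) \<beta> * pmf (strat \<beta>) y0"
proof -
  have inner: "pmf (bind_pmf (strat b) (\<lambda>y. return_pmf (p, b, y))) (p0, \<beta>, y0)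
     = (if p = p0 \<and> b = \<beta> then pmf (strat \<beta>) y0 else 0)" for p b
    unfolding pmf_bind
    by (subst integral_measure_pmf_real[of "{y0}"]) (auto simp: indicator_def)
  have mid: "pmf (bind_pmf (Pi_pmf {1..l} False (\<lambda>_. bernoulli_pmf p))
       (\<lambda>b. bind_pmf (strat b) (\<lambda>y. return_pmf (p, b, y)))) (p0, \<beta>, y0)
     = (if p = p0 then pmf (Pi_pmf {1..l} False (\<lambda>_. bernoulli_pmf p0)) \<beta> * pmf (strat \<beta>) y0 else 0)" for p
    unfolding pmf_bind[where N="Pi_pmf {1..l} False (\<lambda>_. bernoulli_pmf p)"] inner
    by (subst integral_measure_pmf_real[of "{\<beta>}"]) (auto split: if_splits)
  show ?thesis
    unfolding pirate_exp_def pmf_bind[of P] mid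
    by (subst integral_measure_pmf_real[of "{p0}"]) (auto split: if_splits)
qed

lemma pmf_Pi_beta:
  assumes "I \<subseteq> {1..l}" "0 \<le> p" "p \<le> 1"
  shows "pmf (Pi_pmf {1..l} False (\<lambda>_. bernoulli_pmf p)) (\<lambda>i. i \<in> I) = p ^ card I * (1 - p) ^ (l - card I)"
proof -
  have "pmf (Pi_pmf {1..l} False (\<lambda>_. bernoulli_pmf p)) (\<lambda>i. i \<in> I) = (\<Prod>i\<in>{1..l}. if i \<in> I then p else 1 - p)"
    using assms by (subst pmf_Pi) (auto intro!: prod.cong)
  also have "\<dots> = p ^ card ({1..l} \<inter> I) * (1 - p) ^ card ({1..l} \<inter> - I)"
    by (subst prod.If_cases) auto
  also have "card ({1..l} \<inter> I) = card I" using assms(1) by (simp add: Int_absorb1)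
  also have "{1..l} \<inter> - I = {1..l} - I" by auto
  also have "card ({1..l} - I) = l - card I" using assms(1) by (simp add: card_Diff_subset finite_subset)
  finally show ?thesis .
qed

definition bvec :: "nat set \<Rightarrow> nat \<Rightarrow> bool" where "bvec I = (\<lambda>i. i \<in> I)"

lemma pt_beta:
  assumes "I \<subseteq> {1..l}" "0 \<le> p" "p \<le> 1"
  shows "pmf (pirate_exp P l strat) (p, bvec I, One)
     = pmf P p * (p ^ card I * (1 - p) ^ (l - card I)) * pmf (strat (bvec I)) One"
  unfolding pmf_exp_pt using pmf_Pi_beta[OF assms] by (simp add: bvec_def)

lemma set_exp_fst:
  assumes "\<omega> \<in> set_pmf (pirate_exp P l strat)" shows "fst \<omega> \<in> set_pmf P"
proof -
  obtain p b y where w: "\<omega> = (p, b, y)" by (cases \<omega>) auto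
  have "pmf (pirate_exp P l strat) (p, b, y) \<noteq> 0" using assms w by (simp add: set_pmf_eq)
  then have "pmf P p \<noteq> 0" by (simp add: pmf_exp_pt)
  then show ?thesis using w by (simp add: set_pmf_eq)
qed

lemma num_eq:
  assumes "I \<subseteq> {1..l}" "0 \<le> p" "p \<le> 1"
  shows "measure_pmf.prob (pirate_exp P l strat) {\<omega> \<in> evB' I. fst \<omega> = p}
     = pmf P p * (p ^ card I * (1 - p) ^ (l - card I)) * pmf (strat (bvec I)) One"
proof -
  have "{\<omega> \<in> evB' I. fst \<omega> = p} = {(p, bvec I, One)}"
    by (auto simp: evB'_def bvec_def)
  then show ?thesis
    using assms by (simp add: measure_pmf_single pt_beta)
qed

lemma den_eq:
  assumes "I \<subseteq> {1..l}" "finite_bias_dist P"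
  shows "measure_pmf.prob (pirate_exp P l strat) (evB' I)
     = (\<Sum>p\<in>set_pmf P. pmf P p * (p ^ card I * (1 - p) ^ (l - card I)) * pmf (strat (bvec I)) One)"
proof -
  let ?M = "pirate_exp P l strat"
  define T where "T = (\<lambda>p. (p, bvec I, One)) ` set_pmf P"
  have fin: "finite (set_pmf P)" and sub: "set_pmf P \<subseteq> {0<..<1}"
    using assms(2) by (auto simp: finite_bias_dist_def)
  have "evB' I \<inter> set_pmf ?M = T \<inter> set_pmf ?M"
    using set_exp_fst[of _ P l strat] by (force simp: T_def evB'_def bvec_def)
  then have "measure ?M (evB' I) = measure ?M T"
    by (metis measure_Int_set_pmf)
  also have "\<dots> = sum (pmf ?M) T" using fin by (simp add: T_def measure_measure_pmf_finite)
  also have "\<dots> = (\<Sum>p\<in>set_pmf P. pmf ?M (p, bvec I, One))"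
    unfolding T_def by (subst sum.reindex) (auto simp: inj_on_def)
  also have "\<dots> = (\<Sum>p\<in>set_pmf P. pmf P p * (p ^ card I * (1 - p) ^ (l - card I)) * pmf (strat (bvec I)) One)"
    apply (rule sum.cong[OF refl])
    using sub assms(1) by (subst pt_beta) auto
  finally show ?thesis .
qed

lemma expect_sum:
  assumes "finite_bias_dist P"
  shows "measure_pmf.expectation P h = (\<Sum>p\<in>set_pmf P. pmf P p * h p)"
  using assms unfolding finite_bias_dist_def
  by (subst integral_measure_pmf_real[of "set_pmf P"]) (auto simp: mult.commute)

lemma sum_eq:
  assumes "I \<subseteq> {1..l}" "finite_bias_dist P"
  shows "(\<Sum>p\<in>set_pmf P.
                 measure_pmf.prob (pirate_exp P l strat) {\<omega> \<in> evB' I. fst \<omega> = p}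
                   / measure_pmf.prob (pirate_exp P l strat) (evB' I)
                 * (real (card I) * bias_sigma p - real (l - card I) * bias_sigma (1 - p)))
     = pmf (strat (bvec I)) One * measure_pmf.expectation P (fbias l (card I))
         / measure_pmf.prob (pirate_exp P l strat) (evB' I)"
proof -
  have sub: "set_pmf P \<subseteq> {0<..<1}"
    using assms(2) by (auto simp: finite_bias_dist_def)
  have "(\<Sum>p\<in>set_pmf P.
                 measure_pmf.prob (pirate_exp P l strat) {\<omega> \<in> evB' I. fst \<omega> = p}
                   / measure_pmf.prob (pirate_exp P l strat) (evB' I)
                 * (real (card I) * bias_sigma p - real (l - card I) * bias_sigma (1 - p)))
     = (\<Sum>p\<in>set_pmf P. pmf (strat (bvec I)) One * (pmf P p * fbias l (card I) p)
         / measure_pmf.prob (pirate_exp P l strat) (evB' I))"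
    apply (rule sum.cong[OF refl])
    subgoal for p
      using sub assms(1) by (subst num_eq) (auto simp: fbias_def)
    done
  also have "\<dots> = pmf (strat (bvec I)) One * (\<Sum>p\<in>set_pmf P. pmf P p * fbias l (card I) p)
         / measure_pmf.prob (pirate_exp P l strat) (evB' I)"
    by (simp add: sum_divide_distrib[symmetric] sum_distrib_left)
  finally show ?thesis using expect_sum[OF assms(2)] by simp
qed

lemma sym_map:
  assumes "finite_bias_dist P" shows "map_pmf (\<lambda>p. 1 - p) P = P"
proof (rule pmf_eqI)
  fix a :: real
  have "(\<lambda>p. 1 - p) -` {a} = {1 - a}" by auto
  then show "pmf (map_pmf (\<lambda>p. 1 - p) P) a = pmf P a"
    using assms by (simp add: pmf_map measure_pmf_single finite_bias_dist_def)
qed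

lemma fbias_flip:
  assumes "x \<le> l" shows "fbias l (l - x) (1 - p) = - fbias l x p"
proof -
  have "l - (l - x) = x" using assms by simp
  then show ?thesis unfolding fbias_def by (simp add: algebra_simps)
qed

lemma E_flip:
  assumes "finite_bias_dist P" "x \<le> l"
  shows "measure_pmf.expectation P (fbias l (l - x)) = - measure_pmf.expectation P (fbias l x)"
proof -
  have "measure_pmf.expectation P (fbias l (l - x))
      = measure_pmf.expectation (map_pmf (\<lambda>p. 1 - p) P) (fbias l (l - x))"
    using sym_map[OF assms(1)] by simp
  also have "\<dots> = measure_pmf.expectation P (\<lambda>p. - fbias l x p)"
    using fbias_flip[OF assms(2)] by simp
  finally show ?thesis by simp
qed

lemma E_zero:
  assumes "finite_bias_dist P" "c_indist c P" "2 \<le> l" "l \<le> c" "1 \<le> x" "x \<le> l - 1"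
  shows "measure_pmf.expectation P (fbias l x) = 0"
proof -
  have S: "(\<Sum>x = 1..l-1. real (l choose x) * Rterm P l x) = 0"
    using assms unfolding c_indist_def by blast
  have R0: "Rterm P l y = 0" if "1 \<le> y" "y \<le> l - 1" for y
  proof -
    have nn: "\<forall>z\<in>{1..l-1}. 0 \<le> real (l choose z) * Rterm P l z"
      by (auto simp: Rterm_def)
    have "real (l choose y) * Rterm P l y = 0"
      using S nn that by (subst (asm) sum_nonneg_eq_0_iff) auto
    moreover have "l choose y > 0" using that by simp
    ultimately show ?thesis by simp
  qed
  have "measure_pmf.expectation P (fbias l x) \<le> 0"
    using R0[OF assms(5,6)] unfolding Rterm_def by (simp add: max_def split: if_splits)
  moreover have "measure_pmf.expectation P (fbias l (l - x)) \<le> 0"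
  proof -
    have "1 \<le> l - x" "l - x \<le> l - 1" using assms by arith+
    from R0[OF this] show ?thesis unfolding Rterm_def by (simp add: max_def split: if_splits)
  qed
  ultimately show ?thesis using E_flip[OF assms(1), of x l] assms by linarith
qed

definition strat0 :: "nat \<Rightarrow> (nat \<Rightarrow> bool) \<Rightarrow> sym pmf" where
  "strat0 l b = (if \<forall>i\<in>{1..l}. b i = b 1 then return_pmf (if b 1 then One else Zero) else return_pmf One)"

lemma strat0_valid: "valid_strategy l (strat0 l)"
  unfolding valid_strategy_def
proof (intro allI impI)
  fix b :: "nat \<Rightarrow> bool"
  assume h: "\<forall>i\<in>{1..l}. b i = b 1"
  show "strat0 l b = return_pmf (if b 1 then One else Zero)"
    unfolding strat0_def by (rule if_P[OF h])
qed

theorem proposition1: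
  fixes c :: nat and P :: "real pmf"
  assumes "c \<ge> 2" and "finite_bias_dist P"
  shows "(\<forall>l I strat. 2 \<le> l \<and> l \<le> c \<and> I \<subseteq> {1..l} \<and> 1 \<le> card I \<and> card I \<le> l - 1
            \<and> valid_strategy l strat
            \<and> measure_pmf.prob (pirate_exp P l strat) (evB' I) > 0
          \<longrightarrow> (\<Sum>p\<in>set_pmf P.
                 measure_pmf.prob (pirate_exp P l strat) {\<omega> \<in> evB' I. fst \<omega> = p}
                   / measure_pmf.prob (pirate_exp P l strat) (evB' I)
                 * (real (card I) * bias_sigma p - real (l - card I) * bias_sigma (1 - p))) = 0)
         \<longleftrightarrow> c_indist c P"
proof
  assume H: "\<forall>l I strat. 2 \<le> l \<and> l \<le> c \<and> I \<subseteq> {1..l} \<and> 1 \<le> card I \<and> card I \<le> l - 1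
            \<and> valid_strategy l strat
            \<and> measure_pmf.prob (pirate_exp P l strat) (evB' I) > 0
          \<longrightarrow> (\<Sum>p\<in>set_pmf P.
                 measure_pmf.prob (pirate_exp P l strat) {\<omega> \<in> evB' I. fst \<omega> = p}
                   / measure_pmf.prob (pirate_exp P l strat) (evB' I)
                 * (real (card I) * bias_sigma p - real (l - card I) * bias_sigma (1 - p))) = 0"
  have fin: "finite (set_pmf P)" and sub: "set_pmf P \<subseteq> {0<..<1}"
    using assms(2) by (auto simp: finite_bias_dist_def)
  have E0: "measure_pmf.expectation P (fbias l x) = 0"
    if l: "2 \<le> l" "l \<le> c" and x: "1 \<le> x" "x \<le> l - 1" for l x
  proof -
    define I where "I = {1..x}"
    have I: "I \<subseteq> {1..l}" "card I = x" using x by (auto simp: I_def)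
    have q: "pmf (strat0 l (bvec I)) One = 1"
    proof -
      have "\<not> (\<forall>i\<in>{1..l}. bvec I i = bvec I 1)"
      proof
        assume A: "\<forall>i\<in>{1..l}. bvec I i = bvec I 1"
        have "l \<in> {1..l}" using l by simp
        then have "bvec I l = bvec I 1" using A by blast
        then show False using x l by (auto simp: bvec_def I_def)
      qed
      then have "strat0 l (bvec I) = return_pmf One" unfolding strat0_def by (rule if_not_P)
      then show ?thesis by simp
    qed
    have D: "measure_pmf.prob (pirate_exp P l (strat0 l)) (evB' I) > 0"
      unfolding den_eq[OF I(1) assms(2)] q
    proof (rule sum_pos[OF fin])
      show "set_pmf P \<noteq> {}" by (rule set_pmf_not_empty)
      fix p assume "p \<in> set_pmf P"
      then show "0 < pmf P p * (p ^ card I * (1 - p) ^ (l - card I)) * 1"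
        using sub by (auto simp: pmf_positive)
    qed
    have "(\<Sum>p\<in>set_pmf P.
                 measure_pmf.prob (pirate_exp P l (strat0 l)) {\<omega> \<in> evB' I. fst \<omega> = p}
                   / measure_pmf.prob (pirate_exp P l (strat0 l)) (evB' I)
                 * (real (card I) * bias_sigma p - real (l - card I) * bias_sigma (1 - p))) = 0"
      using H[rule_format, of l I "strat0 l"] l I x D strat0_valid by simp
    then have "measure_pmf.expectation P (fbias l x) / measure_pmf.prob (pirate_exp P l (strat0 l)) (evB' I) = 0"
      using sum_eq[OF I(1) assms(2), of "strat0 l", unfolded q I(2)] by (simp add: I(2))
    then show ?thesis using D by simp
  qed
  show "c_indist c P"
    unfolding c_indist_def Rterm_def
  proof (intro allI impI)
    fix l assume l: "2 \<le> l \<and> l \<le> c"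
    show "(\<Sum>x = 1..l - 1. real (l choose x) * max 0 (measure_pmf.expectation P (fbias l x))) = 0"
    proof (rule sum.neutral, rule ballI)
      fix x assume "x \<in> {1..l-1}"
      then show "real (l choose x) * max 0 (measure_pmf.expectation P (fbias l x)) = 0"
        using E0[of l x] l by simp
    qed
  qed
next
  assume C: "c_indist c P"
  show "\<forall>l I strat. 2 \<le> l \<and> l \<le> c \<and> I \<subseteq> {1..l} \<and> 1 \<le> card I \<and> card I \<le> l - 1
            \<and> valid_strategy l strat
            \<and> measure_pmf.prob (pirate_exp P l strat) (evB' I) > 0
          \<longrightarrow> (\<Sum>p\<in>set_pmf P.
                 measure_pmf.prob (pirate_exp P l strat) {\<omega> \<in> evB' I. fst \<omega> = p}
                   / measure_pmf.prob (pirate_exp P l strat) (evB' I)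
                 * (real (card I) * bias_sigma p - real (l - card I) * bias_sigma (1 - p))) = 0"
  proof (intro allI impI)
    fix l I strat
    assume a: "2 \<le> l \<and> l \<le> c \<and> I \<subseteq> {1..l} \<and> 1 \<le> card I \<and> card I \<le> l - 1
            \<and> valid_strategy l strat
            \<and> measure_pmf.prob (pirate_exp P l strat) (evB' I) > 0"
    then have "measure_pmf.expectation P (fbias l (card I)) = 0"
      using E_zero[OF assms(2) C] by auto
    then show "(\<Sum>p\<in>set_pmf P.
                 measure_pmf.prob (pirate_exp P l strat) {\<omega> \<in> evB' I. fst \<omega> = p}
                   / measure_pmf.prob (pirate_exp P l strat) (evB' I)
                 * (real (card I) * bias_sigma p - real (l - card I) * bias_sigma (1 - p))) = 0"
      using a sum_eq[OF _ assms(2), of I l strat] by simp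
  qed
qed

end
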